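(* Let $\mathcal P=\langle F,R\rangle$ be a program and $H$ a hypothesis. Then $T_R(F)$ and the support $s^H_{\mathcal P}$ are compatible.
   Context: Let $\langle \mathcal{B},\le_t,\le_k\rangle$ be a complete, infinitely distributive bilattice with negation satisfying the infinitary interlacing conditions; $\wedge,\vee$ are meet/join for $\le_t$, $\otimes,\oplus$ meet/join for $\le_k$, $\mathcal U$ is the bottom of $\le_k$. A closed formula is built from ground literals and elements of $\mathcal B$ using $\wedge,\vee,\otimes,\oplus,\exists,\forall$ (quantifiers over closed terms). A program $\mathcal P=\langle F,R\rangle$ consists of a function $F$ from the Herbrand base $\mathcal{HB}_{\mathcal P}$ to $\mathcal B$ and a finite set $R$ of ground clauses $A\leftarrow B$, each ground atom being the head of at most one clause; $Head(\mathcal P)$ is the set of heads. An interpretation (or hypothesis) is a function $I:\mathcal{HB}_{\mathcal P}\to\mathcal B$, extended to closed formulas homomorphically ($I(\neg A)=\neg I(A)$, $I(X\wedge Y)=I(X)\wedge I(Y)$ etc., $\exists$ as $\bigvee$, $\forall$ as $\bigwedge$ over closed instances). Operations on interpretations are pointwise. $I,J$ are compatible if $I(A)\neq\mathcal U$ and $J(A)\neq\mathcal U$ imply $I(A)=J(A)$ for all $A$. $I\le J$ means $I(A)\neq\mathcal U\Rightarrow I(A)=J(A)$ for all $A$. $I_{/S}$ is $I$ on $S$ and $\mathcal U$ elsewhere. $B\equiv_I\alpha$ means $J(B)=\alpha$ for all $J$ with $I\le J$. $T_R(I)(A)=\alpha$ if there is a clause $A\leftarrow B$ in $R$ with $B\equiv_I\alpha$,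 and $\mathcal U$ otherwise. $H'$ is sound w.r.t. $\mathcal P$ if $F,H'$ are compatible and $H'_{/Head(\mathcal P)}\le T_R(F\oplus H')$. The support $s^H_{\mathcal P}$ of $H$ is the maximal (w.r.t. $\le$) interpretation $H'\le H$ that is sound w.r.t. $\mathcal P$; it equals $\bigoplus\{H'\mid H'\le H,\ H' \text{ sound w.r.t. } \mathcal P\}$. *)

theory Defs
  imports Main
begin

definition is_lub :: "('v \<Rightarrow> 'v \<Rightarrow> bool) \<Rightarrow> 'v set \<Rightarrow> 'v \<Rightarrow> bool" where
  "is_lub le S x \<longleftrightarrow> (\<forall>s\<in>S. le s x) \<and> (\<forall>y. (\<forall>s\<in>S. le s y) \<longrightarrow> le x y)"

definition is_glb :: "('v \<Rightarrow> 'v \<Rightarrow> bool) \<Rightarrow> 'v set \<Rightarrow> 'v \<Rightarrow> bool" where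
  "is_glb le S x \<longleftrightarrow> (\<forall>s\<in>S. le x s) \<and> (\<forall>y. (\<forall>s\<in>S. le y s) \<longrightarrow> le y x)"

definition lub :: "('v \<Rightarrow> 'v \<Rightarrow> bool) \<Rightarrow> 'v set \<Rightarrow> 'v" where
  "lub le S = (THE x. is_lub le S x)"

definition glb :: "('v \<Rightarrow> 'v \<Rightarrow> bool) \<Rightarrow> 'v set \<Rightarrow> 'v" where
  "glb le S = (THE x. is_glb le S x)"

definition complete_po :: "('v \<Rightarrow> 'v \<Rightarrow> bool) \<Rightarrow> bool" where
  "complete_po le \<longleftrightarrow>
     (\<forall>x. le x x) \<and> (\<forall>x y. le x y \<longrightarrow> le y x \<longrightarrow> x = y) \<and>
     (\<forall>x y z. le x y \<longrightarrow> le y z \<longrightarrow> le x z) \<and>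
     (\<forall>S. (\<exists>x. is_lub le S x) \<and> (\<exists>x. is_glb le S x))"

text \<open>Binary operations: \<open>\<and>,\<or>\<close> (truth order), \<open>\<otimes>,\<oplus>\<close> (knowledge order); infinitary
  versions \<open>\<Or>,\<And>\<close> (truth) and \<open>\<Sum>,\<Prod>\<close> (knowledge); \<open>\<U>\<close> = bottom of knowledge order.\<close>

definition bmeet :: "('v \<Rightarrow> 'v \<Rightarrow> bool) \<Rightarrow> 'v \<Rightarrow> 'v \<Rightarrow> 'v" where
  "bmeet le a b = glb le {a, b}"

definition bjoin :: "('v \<Rightarrow> 'v \<Rightarrow> bool) \<Rightarrow> 'v \<Rightarrow> 'v \<Rightarrow> 'v" where
  "bjoin le a b = lub le {a, b}"

definition Ubot :: "('v \<Rightarrow> 'v \<Rightarrow> bool) \<Rightarrow> 'v" where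
  "Ubot kle = glb kle UNIV"

definition inf_distrib_bilattice ::
  "('v \<Rightarrow> 'v \<Rightarrow> bool) \<Rightarrow> ('v \<Rightarrow> 'v \<Rightarrow> bool) \<Rightarrow> ('v \<Rightarrow> 'v) \<Rightarrow> bool" where
  "inf_distrib_bilattice tle kle neg \<longleftrightarrow>
     complete_po tle \<and> complete_po kle \<and>
     \<comment> \<open>negation\<close>
     (\<forall>a b. tle a b \<longrightarrow> tle (neg b) (neg a)) \<and>
     (\<forall>a b. kle a b \<longrightarrow> kle (neg a) (neg b)) \<and>
     (\<forall>a. neg (neg a) = a) \<and>
     \<comment> \<open>infinitary interlacing\<close>
     (\<forall>(I::'v set) f g. (\<forall>i\<in>I. kle (f i) (g i)) \<longrightarrow>
        kle (lub tle (f ` I)) (lub tle (g ` I)) \<and> kle (glb tle (f ` I)) (glb tle (g ` I))) \<and>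
     (\<forall>(I::'v set) f g. (\<forall>i\<in>I. tle (f i) (g i)) \<longrightarrow>
        tle (lub kle (f ` I)) (lub kle (g ` I)) \<and> tle (glb kle (f ` I)) (glb kle (g ` I))) \<and>
     \<comment> \<open>infinite distributivity: each binary operation distributes over every infinitary
        operation other than its own infinitary version\<close>
     (\<forall>a S. S \<noteq> {} \<longrightarrow>
        (\<forall>op\<in>{bmeet tle, bjoin tle, bmeet kle, bjoin kle}.
          \<forall>Op\<in>{lub tle, glb tle, lub kle, glb kle}.
            \<not> ((op = bmeet tle \<and> Op = glb tle) \<or> (op = bjoin tle \<and> Op = lub tle) \<or>
               (op = bmeet kle \<and> Op = glb kle) \<or> (op = bjoin kle \<and> Op = lub kle)) \<longrightarrow>
            op a (Op S) = Op ((\<lambda>s. op a s) ` S)))"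

text \<open>Closed formulas over ground atoms \<open>'a\<close> (the Herbrand base), closed terms \<open>'t\<close>
  (quantifiers range over all closed terms; a quantified formula is given by the family of its
  closed instances) and bilattice values \<open>'v\<close>.\<close>

datatype ('a, 't, 'v) form =
    Lit 'a
  | NLit 'a
  | Val 'v
  | FAnd "('a, 't, 'v) form" "('a, 't, 'v) form"
  | FOr "('a, 't, 'v) form" "('a, 't, 'v) form"
  | FOtimes "('a, 't, 'v) form" "('a, 't, 'v) form"
  | FOplus "('a, 't, 'v) form" "('a, 't, 'v) form"
  | FEx "'t \<Rightarrow> ('a, 't, 'v) form"
  | FAll "'t \<Rightarrow> ('a, 't, 'v) form"

primrec eval :: "('v \<Rightarrow> 'v \<Rightarrow> bool) \<Rightarrow> ('v \<Rightarrow> 'v \<Rightarrow> bool) \<Rightarrow> ('v \<Rightarrow> 'v) \<Rightarrow> ('a \<Rightarrow> 'v)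
    \<Rightarrow> ('a, 't, 'v) form \<Rightarrow> 'v" where
  "eval tle kle neg I (Lit A) = I A"
| "eval tle kle neg I (NLit A) = neg (I A)"
| "eval tle kle neg I (Val v) = v"
| "eval tle kle neg I (FAnd X Y) = bmeet tle (eval tle kle neg I X) (eval tle kle neg I Y)"
| "eval tle kle neg I (FOr X Y) = bjoin tle (eval tle kle neg I X) (eval tle kle neg I Y)"
| "eval tle kle neg I (FOtimes X Y) = bmeet kle (eval tle kle neg I X) (eval tle kle neg I Y)"
| "eval tle kle neg I (FOplus X Y) = bjoin kle (eval tle kle neg I X) (eval tle kle neg I Y)"
| "eval tle kle neg I (FEx f) = lub tle (range (\<lambda>t. eval tle kle neg I (f t)))"
| "eval tle kle neg I (FAll f) = glb tle (range (\<lambda>t. eval tle kle neg I (f t)))"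

text \<open>A program: a function \<open>F\<close> on the Herbrand base and a finite set of ground clauses
  \<open>(A, B)\<close> meaning \<open>A \<leftarrow> B\<close>, each atom the head of at most one clause.\<close>

definition program :: "('a \<Rightarrow> 'v) \<Rightarrow> ('a \<times> ('a, 't, 'v) form) set \<Rightarrow> bool" where
  "program F R \<longleftrightarrow> finite R \<and> (\<forall>A B B'. (A, B) \<in> R \<longrightarrow> (A, B') \<in> R \<longrightarrow> B = B')"

definition heads :: "('a \<times> ('a, 't, 'v) form) set \<Rightarrow> 'a set" where
  "heads R = fst ` R"

definition compatible :: "('v \<Rightarrow> 'v \<Rightarrow> bool) \<Rightarrow> ('a \<Rightarrow> 'v) \<Rightarrow> ('a \<Rightarrow> 'v) \<Rightarrow> bool" where
  "compatible kle I J \<longleftrightarrow>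
     (\<forall>A. I A \<noteq> Ubot kle \<longrightarrow> J A \<noteq> Ubot kle \<longrightarrow> I A = J A)"

definition info_le :: "('v \<Rightarrow> 'v \<Rightarrow> bool) \<Rightarrow> ('a \<Rightarrow> 'v) \<Rightarrow> ('a \<Rightarrow> 'v) \<Rightarrow> bool" where
  "info_le kle I J \<longleftrightarrow> (\<forall>A. I A \<noteq> Ubot kle \<longrightarrow> I A = J A)"

definition restrict_interp :: "('v \<Rightarrow> 'v \<Rightarrow> bool) \<Rightarrow> ('a \<Rightarrow> 'v) \<Rightarrow> 'a set \<Rightarrow> ('a \<Rightarrow> 'v)" where
  "restrict_interp kle I S = (\<lambda>A. if A \<in> S then I A else Ubot kle)"

definition interp_oplus :: "('v \<Rightarrow> 'v \<Rightarrow> bool) \<Rightarrow> ('a \<Rightarrow> 'v) \<Rightarrow> ('a \<Rightarrow> 'v) \<Rightarrow> ('a \<Rightarrow> 'v)" where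
  "interp_oplus kle I J = (\<lambda>A. bjoin kle (I A) (J A))"

definition equiv_under ::
  "('v \<Rightarrow> 'v \<Rightarrow> bool) \<Rightarrow> ('v \<Rightarrow> 'v \<Rightarrow> bool) \<Rightarrow> ('v \<Rightarrow> 'v) \<Rightarrow> ('a \<Rightarrow> 'v)
    \<Rightarrow> ('a, 't, 'v) form \<Rightarrow> 'v \<Rightarrow> bool" where
  "equiv_under tle kle neg I B \<alpha> \<longleftrightarrow> (\<forall>J. info_le kle I J \<longrightarrow> eval tle kle neg J B = \<alpha>)"

definition T_op ::
  "('v \<Rightarrow> 'v \<Rightarrow> bool) \<Rightarrow> ('v \<Rightarrow> 'v \<Rightarrow> bool) \<Rightarrow> ('v \<Rightarrow> 'v)
    \<Rightarrow> ('a \<times> ('a, 't, 'v) form) set \<Rightarrow> ('a \<Rightarrow> 'v) \<Rightarrow> ('a \<Rightarrow> 'v)" where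
  "T_op tle kle neg R I = (\<lambda>A.
     if \<exists>B \<alpha>. (A, B) \<in> R \<and> equiv_under tle kle neg I B \<alpha>
     then (SOME \<alpha>. \<exists>B. (A, B) \<in> R \<and> equiv_under tle kle neg I B \<alpha>)
     else Ubot kle)"

definition sound ::
  "('v \<Rightarrow> 'v \<Rightarrow> bool) \<Rightarrow> ('v \<Rightarrow> 'v \<Rightarrow> bool) \<Rightarrow> ('v \<Rightarrow> 'v)
    \<Rightarrow> ('a \<Rightarrow> 'v) \<Rightarrow> ('a \<times> ('a, 't, 'v) form) set \<Rightarrow> ('a \<Rightarrow> 'v) \<Rightarrow> bool" where
  "sound tle kle neg F R H' \<longleftrightarrow>
     compatible kle F H' \<and>
     info_le kle (restrict_interp kle H' (heads R)) (T_op tle kle neg R (interp_oplus kle F H'))"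

definition support ::
  "('v \<Rightarrow> 'v \<Rightarrow> bool) \<Rightarrow> ('v \<Rightarrow> 'v \<Rightarrow> bool) \<Rightarrow> ('v \<Rightarrow> 'v)
    \<Rightarrow> ('a \<Rightarrow> 'v) \<Rightarrow> ('a \<times> ('a, 't, 'v) form) set \<Rightarrow> ('a \<Rightarrow> 'v) \<Rightarrow> ('a \<Rightarrow> 'v)" where
  "support tle kle neg F R H = (\<lambda>A.
     lub kle ((\<lambda>H'. H' A) ` {H'. info_le kle H' H \<and> sound tle kle neg F R H'}))"

end

theory Submission
  imports Defs
begin

lemma lub_unique:
  assumes "complete_po le" "is_lub le S x" shows "lub le S = x"
  unfolding lub_def
proof (rule the_equality)
  show "is_lub le S x" by fact
  fix y assume "is_lub le S y"
  with assms show "y = x" unfolding is_lub_def complete_po_def by blast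
qed

lemma glb_unique:
  assumes "complete_po le" "is_glb le S x" shows "glb le S = x"
  unfolding glb_def
proof (rule the_equality)
  show "is_glb le S x" by fact
  fix y assume "is_glb le S y"
  with assms show "y = x" unfolding is_glb_def complete_po_def by blast
qed

lemma Ubot_le:
  assumes "complete_po kle" shows "kle (Ubot kle) x"
proof -
  obtain u where u: "is_glb kle UNIV u" using assms unfolding complete_po_def by blast
  hence "Ubot kle = u" using glb_unique[OF assms] unfolding Ubot_def by blast
  with u show ?thesis unfolding is_glb_def by blast
qed

lemma lub_sub2:
  assumes "complete_po kle" "S \<subseteq> {Ubot kle, a}" "a \<in> S" shows "lub kle S = a"
proof (rule lub_unique[OF assms(1)])
  show "is_lub kle S a" unfolding is_lub_def
    using assms Ubot_le[OF assms(1)] unfolding complete_po_def by blast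
qed

lemma lub_sub1:
  assumes "complete_po kle" "S \<subseteq> {Ubot kle}" shows "lub kle S = Ubot kle"
proof (rule lub_unique[OF assms(1)])
  show "is_lub kle S (Ubot kle)" unfolding is_lub_def
    using assms Ubot_le[OF assms(1)] unfolding complete_po_def by blast
qed

lemma bjoin_U:
  assumes "complete_po kle" shows "bjoin kle a (Ubot kle) = a"
  unfolding bjoin_def using lub_sub2[OF assms, of "{a, Ubot kle}" a] by auto

lemma bjoin_same:
  assumes "complete_po kle" shows "bjoin kle a a = a"
  unfolding bjoin_def using lub_sub2[OF assms, of "{a}" a] by auto

theorem mainTheorem3:
  fixes tle kle :: "'v \<Rightarrow> 'v \<Rightarrow> bool" and neg :: "'v \<Rightarrow> 'v"
    and F H :: "'a \<Rightarrow> 'v" and R :: "('a \<times> ('a, 't, 'v) form) set"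
  assumes "inf_distrib_bilattice tle kle neg"
    and "program F R"
  shows "compatible kle (T_op tle kle neg R F) (support tle kle neg F R H)"
proof -
  have cp: "complete_po kle" using assms(1) unfolding inf_distrib_bilattice_def by blast
  have uniq: "\<And>A B B'. (A, B) \<in> R \<Longrightarrow> (A, B') \<in> R \<Longrightarrow> B = B'"
    using assms(2) unfolding program_def by blast
  have refl: "\<And>I. info_le kle I I" unfolding info_le_def by blast
  show ?thesis unfolding compatible_def
  proof (intro allI impI)
    fix A
    assume T1: "T_op tle kle neg R F A \<noteq> Ubot kle"
      and S1: "support tle kle neg F R H A \<noteq> Ubot kle"
    from T1 obtain B \<alpha> where B: "(A, B) \<in> R" and eq: "equiv_under tle kle neg F B \<alpha>"
      unfolding T_op_def by (auto split: if_splits)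
    have Tval: "T_op tle kle neg R F A = \<alpha>"
    proof -
      have ex: "\<exists>B \<alpha>. (A, B) \<in> R \<and> equiv_under tle kle neg F B \<alpha>" using B eq by blast
      have "\<exists>B. (A, B) \<in> R \<and> equiv_under tle kle neg F B
          (SOME \<alpha>. \<exists>B. (A, B) \<in> R \<and> equiv_under tle kle neg F B \<alpha>)"
        by (rule someI_ex) (use ex in blast)
      then obtain B' where "(A, B') \<in> R" "equiv_under tle kle neg F B'
          (SOME \<alpha>. \<exists>B. (A, B) \<in> R \<and> equiv_under tle kle neg F B \<alpha>)" by blast
      moreover have "B' = B" using uniq B calculation(1) by blast
      ultimately show ?thesis using ex eq refl unfolding T_op_def equiv_under_def by auto
    qed
    let ?S = "(\<lambda>H'. H' A) ` {H'. info_le kle H' H \<and> sound tle kle neg F R H'}"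
    have sub: "?S \<subseteq> {Ubot kle, \<alpha>}"
    proof
      fix v assume "v \<in> ?S"
      then obtain H' where v: "v = H' A" and snd: "sound tle kle neg F R H'" by blast
      show "v \<in> {Ubot kle, \<alpha>}"
      proof (cases "H' A = Ubot kle")
        case True then show ?thesis using v by simp
      next
        case False
        have comp: "compatible kle F H'" and il: "info_le kle (restrict_interp kle H' (heads R))
            (T_op tle kle neg R (interp_oplus kle F H'))"
          using snd unfolding sound_def by blast+
        have "A \<in> heads R" using B unfolding heads_def by force
        hence HT: "H' A = T_op tle kle neg R (interp_oplus kle F H') A"
          using il False unfolding info_le_def restrict_interp_def by metis
        have Fle: "info_le kle F (interp_oplus kle F H')"
          unfolding info_le_def interp_oplus_def
        proof (intro allI impI)
          fix x assume "F x \<noteq> Ubot kle"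
          then show "F x = bjoin kle (F x) (H' x)"
            using comp bjoin_U[OF cp] bjoin_same[OF cp] unfolding compatible_def by metis
        qed
        have eq2: "equiv_under tle kle neg (interp_oplus kle F H') B \<alpha>"
          using eq Fle unfolding equiv_under_def info_le_def by metis
        have ex: "\<exists>B \<alpha>. (A, B) \<in> R \<and> equiv_under tle kle neg (interp_oplus kle F H') B \<alpha>"
          using B eq2 by blast
        have "\<exists>B. (A, B) \<in> R \<and> equiv_under tle kle neg (interp_oplus kle F H') B
            (SOME \<alpha>. \<exists>B. (A, B) \<in> R \<and> equiv_under tle kle neg (interp_oplus kle F H') B \<alpha>)"
          by (rule someI_ex) (use ex in blast)
        then obtain B' where "(A, B') \<in> R" "equiv_under tle kle neg (interp_oplus kle F H') B'
            (SOME \<alpha>. \<exists>B. (A, B) \<in> R \<and> equiv_under tle kle neg (interp_oplus kle F H') B \<alpha>)"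
          by blast
        moreover have "B' = B" using uniq B calculation(1) by blast
        ultimately have "T_op tle kle neg R (interp_oplus kle F H') A = \<alpha>"
          using ex eq2 refl unfolding T_op_def equiv_under_def by auto
        then show ?thesis using HT v by simp
      qed
    qed
    have "support tle kle neg F R H A = lub kle ?S" unfolding support_def by simp
    moreover have "\<alpha> \<in> ?S"
    proof (rule ccontr)
      assume "\<alpha> \<notin> ?S"
      hence "?S \<subseteq> {Ubot kle}" using sub by blast
      hence "lub kle ?S = Ubot kle" by (rule lub_sub1[OF cp])
      with S1 show False unfolding support_def by simp
    qed
    ultimately have "support tle kle neg F R H A = \<alpha>" using lub_sub2[OF cp sub] by simp
    with Tval show "T_op tle kle neg R F A = support tle kle neg F R H A" by simp
  qed
qed

end
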